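(* Let $n,m\ge1$, $c_1,\dots,c_n>0$, $T>0$, $\epsilon>0$, $\kappa_{ij}\ge0$, $\bar r_1,\dots,\bar r_m>0$, $R=\prod_i[0,\bar r_i]$. For each $i$ let $p_i:\mathbb{R}\to[0,1]$ be continuous and nonincreasing, with $p_i(\tau)=1$ for $\tau\le0$ and $p_i(\tau)\to0$ as $\tau\to\infty$, and let $U_i:[0,\bar r_i]\to\mathbb{R}$ be continuous, nondecreasing and strictly concave, such that for every $\tau\in\mathbb{R}$, $\bar r_ip_i(\tau)$ is the maximizer of $U_i(r)-\tau r$ over $r\in[0,\bar r_i]$. Define $\mu_j(q_j)=0$ for $q_j\le c_j$, $\mu_j(q_j)=T(1-c_j/q_j)$ for $q_j>c_j$; $\delta_{ij}(\mu)=e^{-(\kappa_{ij}+\mu_j)/\epsilon}/\sum_ke^{-(\kappa_{ik}+\mu_k)/\epsilon}$; $\varphi^i_\epsilon(\mu)=-\epsilon\log\sum_je^{-(\kappa_{ij}+\mu_j)/\epsilon}$; and $$W(r,\mu)=\sum_i[r_i\varphi^i_\epsilon(\mu)-U_i(r_i)]+\sum_jc_j\log(1-\mu_j/T)\quad\text{on } R\times[0,T)^n.$$ Consider the elastic dynamics $$\dot q_j=\sum_ix_{ij}-\frac{q_j}{T},\quad \mu_j=\mu_j(q_j),\quad x_{ij}=r_i\delta_{ij}(\mu),\quad r_i=\bar r_ip_i(\varphi^i_\epsilon(\mu)),$$ and call $(X^*,q^*,\mu^*,r^* )$ an equilibrium point if $\mu^*_j=\mu_j(q^*_j)$, $r^*_i=\bar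 r_ip_i(\varphi^i_\epsilon(\mu^* ))$, $x^*_{ij}=r^*_i\delta_{ij}(\mu^* )$ and $\sum_ix^*_{ij}=q^*_j/T$ for all $i,j$. Then the following are equivalent: (i) $(r^*,\mu^* )$ is the saddle point of $W$ (i.e. $W(r^*,\mu)\le W(r^*,\mu^* )\le W(r,\mu^* )$ for all $r\in R$, $\mu\in[0,T)^n$), and $(X^*,q^* )$ is the solution of the problem of minimizing $\sum_{i,j}\kappa_{ij}x_{ij}+\sum_j\beta_j(q_j)+\epsilon\sum_{i,j}x_{ij}\log(x_{ij}/r^*_i)$ subject to $x_{ij}\ge0$, $\sum_jx_{ij}=r^*_i$, $\sum_ix_{ij}=q_j/T$, where $\beta_j(q)=0$ for $q\le c_j$ and $\beta_j(q)=q-c_j-c_j\log(q/c_j)$ for $q>c_j$; (ii) $(X^*,q^*,\mu^*,r^* )$ is an equilibrium point of the elastic dynamics. In particular, the elastic dynamics have a unique equilibrium point.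
   Context: Convention $0\log0=0$ (terms with $x_{ij}=0$ contribute zero). $p_i(\tau)$ is the probability that a customer from location $i$ is willing to wait longer than $\tau$, $\bar r_i$ the maximal request rate, and $U_i$ the associated utility, whose inverse derivative gives the demand curve $\bar r_ip_i$; strict concavity of $U_i$ is the paper's Assumption 1. *)

theory Defs
  imports "HOL-Analysis.Analysis"
begin

text \<open>Locations are indexed by a finite type 'm (i), stations by a finite type 'n (j).\<close>

definition strict_concave_on :: "real set \<Rightarrow> (real \<Rightarrow> real) \<Rightarrow> bool" where
  "strict_concave_on S f \<longleftrightarrow> convex S \<and>
     (\<forall>x\<in>S. \<forall>y\<in>S. \<forall>t. x \<noteq> y \<and> 0 < t \<and> t < 1 \<longrightarrow>
        t * f x + (1 - t) * f y < f (t * x + (1 - t) * y))"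

definition mu_of :: "real \<Rightarrow> real \<Rightarrow> real \<Rightarrow> real" where
  "mu_of T c q = (if q \<le> c then 0 else T * (1 - c / q))"

definition delta :: "real \<Rightarrow> ('m \<Rightarrow> 'n::finite \<Rightarrow> real) \<Rightarrow> ('n \<Rightarrow> real) \<Rightarrow> 'm \<Rightarrow> 'n \<Rightarrow> real" where
  "delta \<epsilon> \<kappa> \<mu> i j =
     exp (- (\<kappa> i j + \<mu> j) / \<epsilon>) / (\<Sum>k\<in>UNIV. exp (- (\<kappa> i k + \<mu> k) / \<epsilon>))"

definition phi :: "real \<Rightarrow> ('m \<Rightarrow> 'n::finite \<Rightarrow> real) \<Rightarrow> ('n \<Rightarrow> real) \<Rightarrow> 'm \<Rightarrow> real" where
  "phi \<epsilon> \<kappa> \<mu> i = - \<epsilon> * ln (\<Sum>j\<in>UNIV. exp (- (\<kappa> i j + \<mu> j) / \<epsilon>))"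

definition W :: "real \<Rightarrow> ('m::finite \<Rightarrow> 'n::finite \<Rightarrow> real) \<Rightarrow> ('n \<Rightarrow> real) \<Rightarrow> real
                 \<Rightarrow> ('m \<Rightarrow> real \<Rightarrow> real) \<Rightarrow> ('m \<Rightarrow> real) \<Rightarrow> ('n \<Rightarrow> real) \<Rightarrow> real" where
  "W \<epsilon> \<kappa> c T U r \<mu> =
     (\<Sum>i\<in>UNIV. r i * phi \<epsilon> \<kappa> \<mu> i - U i (r i)) + (\<Sum>j\<in>UNIV. c j * ln (1 - \<mu> j / T))"

definition Rbox :: "('m \<Rightarrow> real) \<Rightarrow> ('m \<Rightarrow> real) set" where
  "Rbox rbar = {r. \<forall>i. 0 \<le> r i \<and> r i \<le> rbar i}"

definition Mbox :: "real \<Rightarrow> ('n \<Rightarrow> real) set" where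
  "Mbox T = {\<mu>. \<forall>j. 0 \<le> \<mu> j \<and> \<mu> j < T}"

definition saddle_point_W :: "real \<Rightarrow> ('m::finite \<Rightarrow> 'n::finite \<Rightarrow> real) \<Rightarrow> ('n \<Rightarrow> real) \<Rightarrow> real
      \<Rightarrow> ('m \<Rightarrow> real \<Rightarrow> real) \<Rightarrow> ('m \<Rightarrow> real) \<Rightarrow> ('m \<Rightarrow> real) \<Rightarrow> ('n \<Rightarrow> real) \<Rightarrow> bool" where
  "saddle_point_W \<epsilon> \<kappa> c T U rbar rs \<mu>s \<longleftrightarrow>
     rs \<in> Rbox rbar \<and> \<mu>s \<in> Mbox T \<and>
     (\<forall>r\<in>Rbox rbar. \<forall>\<mu>\<in>Mbox T.
        W \<epsilon> \<kappa> c T U rs \<mu> \<le> W \<epsilon> \<kappa> c T U rs \<mu>s \<and>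
        W \<epsilon> \<kappa> c T U rs \<mu>s \<le> W \<epsilon> \<kappa> c T U r \<mu>s)"

definition beta :: "real \<Rightarrow> real \<Rightarrow> real" where
  "beta c q = (if q \<le> c then 0 else q - c - c * ln (q / c))"

definition xlogx :: "real \<Rightarrow> real \<Rightarrow> real" where
  "xlogx x r = (if x = 0 then 0 else x * ln (x / r))"

definition feasible :: "real \<Rightarrow> ('m::finite \<Rightarrow> real) \<Rightarrow> ('m \<Rightarrow> 'n::finite \<Rightarrow> real) \<Rightarrow> ('n \<Rightarrow> real) \<Rightarrow> bool" where
  "feasible T rs X q \<longleftrightarrow>
     (\<forall>i j. 0 \<le> X i j) \<and> (\<forall>i. (\<Sum>j\<in>UNIV. X i j) = rs i) \<and>
     (\<forall>j. (\<Sum>i\<in>UNIV. X i j) = q j / T)"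

definition objective :: "real \<Rightarrow> ('m::finite \<Rightarrow> 'n::finite \<Rightarrow> real) \<Rightarrow> ('n \<Rightarrow> real)
      \<Rightarrow> ('m \<Rightarrow> real) \<Rightarrow> ('m \<Rightarrow> 'n \<Rightarrow> real) \<Rightarrow> ('n \<Rightarrow> real) \<Rightarrow> real" where
  "objective \<epsilon> \<kappa> c rs X q =
     (\<Sum>i\<in>UNIV. \<Sum>j\<in>UNIV. \<kappa> i j * X i j) + (\<Sum>j\<in>UNIV. beta (c j) (q j))
     + \<epsilon> * (\<Sum>i\<in>UNIV. \<Sum>j\<in>UNIV. xlogx (X i j) (rs i))"

definition solves_transport :: "real \<Rightarrow> real \<Rightarrow> ('m::finite \<Rightarrow> 'n::finite \<Rightarrow> real) \<Rightarrow> ('n \<Rightarrow> real)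
      \<Rightarrow> ('m \<Rightarrow> real) \<Rightarrow> ('m \<Rightarrow> 'n \<Rightarrow> real) \<Rightarrow> ('n \<Rightarrow> real) \<Rightarrow> bool" where
  "solves_transport \<epsilon> T \<kappa> c rs X q \<longleftrightarrow>
     feasible T rs X q \<and>
     (\<forall>X' q'. feasible T rs X' q' \<longrightarrow> objective \<epsilon> \<kappa> c rs X q \<le> objective \<epsilon> \<kappa> c rs X' q')"

definition equilibrium :: "real \<Rightarrow> real \<Rightarrow> ('m::finite \<Rightarrow> 'n::finite \<Rightarrow> real) \<Rightarrow> ('n \<Rightarrow> real)
      \<Rightarrow> ('m \<Rightarrow> real) \<Rightarrow> ('m \<Rightarrow> real \<Rightarrow> real)
      \<Rightarrow> ('m \<Rightarrow> 'n \<Rightarrow> real) \<Rightarrow> ('n \<Rightarrow> real) \<Rightarrow> ('n \<Rightarrow> real) \<Rightarrow> ('m \<Rightarrow> real) \<Rightarrow> bool" where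
  "equilibrium \<epsilon> T \<kappa> c rbar p X q \<mu> r \<longleftrightarrow>
     (\<forall>j. \<mu> j = mu_of T (c j) (q j)) \<and>
     (\<forall>i. r i = rbar i * p i (phi \<epsilon> \<kappa> \<mu> i)) \<and>
     (\<forall>i j. X i j = r i * delta \<epsilon> \<kappa> \<mu> i j) \<and>
     (\<forall>j. (\<Sum>i\<in>UNIV. X i j) = q j / T)"

end

theory Submission
  imports Defs
begin


lemma delta_pos: "0 < delta \<epsilon> \<kappa> \<mu> i j"
  unfolding delta_def by (intro divide_pos_pos sum_pos) auto

lemma delta_sum: "(\<Sum>j\<in>UNIV. delta \<epsilon> \<kappa> \<mu> i j) = 1"
proof -
  have "(\<Sum>k\<in>UNIV. exp (- (\<kappa> i k + \<mu> k) / \<epsilon>)) > 0" by (intro sum_pos) auto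
  then show ?thesis unfolding delta_def by (simp add: sum_divide_distrib[symmetric])
qed

lemma delta_le1: "delta \<epsilon> \<kappa> \<mu> i j \<le> 1"
proof -
  have "delta \<epsilon> \<kappa> \<mu> i j \<le> (\<Sum>j\<in>UNIV. delta \<epsilon> \<kappa> \<mu> i j)"
    by (rule member_le_sum) (auto intro: less_imp_le delta_pos)
  then show ?thesis by (simp add: delta_sum)
qed

lemma tangent_phi:
  fixes \<kappa> :: "'m \<Rightarrow> 'n::finite \<Rightarrow> real"
  assumes eps: "\<epsilon> > 0"
  shows "phi \<epsilon> \<kappa> \<mu>' i \<le> phi \<epsilon> \<kappa> \<mu> i + (\<Sum>j\<in>UNIV. delta \<epsilon> \<kappa> \<mu> i j * (\<mu>' j - \<mu> j))"
proof -
  define e where "e j = exp (- (\<kappa> i j + \<mu> j) / \<epsilon>)" for j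
  define Z where "Z = (\<Sum>j\<in>UNIV. e j)"
  define d where "d j = (\<mu>' j - \<mu> j) / \<epsilon>" for j
  define D where "D = (\<Sum>j\<in>UNIV. e j * d j) / Z"
  have Zpos: "Z > 0" unfolding Z_def e_def by (intro sum_pos) auto
  have e': "exp (- (\<kappa> i j + \<mu>' j) / \<epsilon>) = e j * exp (- d j)" for j
    unfolding e_def d_def using eps by (simp add: exp_add[symmetric] field_simps)
  have "(\<Sum>j\<in>UNIV. exp (- (\<kappa> i j + \<mu>' j) / \<epsilon>)) = (\<Sum>j\<in>UNIV. e j * exp (- d j))"
    by (intro sum.cong refl e')
  also have "\<dots> \<ge> (\<Sum>j\<in>UNIV. e j * (exp (- D) * (1 - (d j - D))))"
  proof (rule sum_mono)
    fix j
    have "exp (- D) * (1 - (d j - D)) \<le> exp (- D) * exp (- (d j - D))"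
      by (rule mult_left_mono) (smt (verit) exp_ge_add_one_self[of "D - d j"], simp)
    also have "\<dots> = exp (- d j)" by (simp add: exp_add[symmetric])
    finally show "e j * (exp (- D) * (1 - (d j - D))) \<le> e j * exp (- d j)"
      by (rule mult_left_mono) (simp add: e_def)
  qed
  moreover have "(\<Sum>j\<in>UNIV. e j * (exp (- D) * (1 - (d j - D)))) = exp (- D) * Z"
  proof -
    have "(\<Sum>j\<in>UNIV. e j * (exp (- D) * (1 - (d j - D))))
        = exp (- D) * ((1 + D) * Z - (\<Sum>j\<in>UNIV. e j * d j))"
      by (simp add: algebra_simps sum.distrib sum_subtractf sum_distrib_left sum_distrib_right[symmetric] Z_def)
    also have "(\<Sum>j\<in>UNIV. e j * d j) = D * Z" using Zpos by (simp add: D_def)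
    finally show ?thesis by (simp add: algebra_simps)
  qed
  ultimately have le: "exp (- D) * Z \<le> (\<Sum>j\<in>UNIV. exp (- (\<kappa> i j + \<mu>' j) / \<epsilon>))" by simp
  have "ln (exp (- D) * Z) \<le> ln (\<Sum>j\<in>UNIV. exp (- (\<kappa> i j + \<mu>' j) / \<epsilon>))"
    using le Zpos by (subst ln_le_cancel_iff) (auto intro: sum_pos)
  then have "- D + ln Z \<le> ln (\<Sum>j\<in>UNIV. exp (- (\<kappa> i j + \<mu>' j) / \<epsilon>))"
    using Zpos by (simp add: ln_mult)
  then have "\<epsilon> * (- D + ln Z) \<le> \<epsilon> * ln (\<Sum>j\<in>UNIV. exp (- (\<kappa> i j + \<mu>' j) / \<epsilon>))"
    using eps by (intro mult_left_mono) auto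
  then have "phi \<epsilon> \<kappa> \<mu>' i \<le> - \<epsilon> * ln Z + \<epsilon> * D"
    unfolding phi_def by (simp add: algebra_simps)
  moreover have "\<epsilon> * D = (\<Sum>j\<in>UNIV. delta \<epsilon> \<kappa> \<mu> i j * (\<mu>' j - \<mu> j))"
  proof -
    have "\<epsilon> * (\<Sum>j\<in>UNIV. e j * d j) = (\<Sum>j\<in>UNIV. e j * (\<mu>' j - \<mu> j))"
      unfolding sum_distrib_left d_def using eps by (intro sum.cong refl) simp
    then have "\<epsilon> * D = (\<Sum>j\<in>UNIV. e j * (\<mu>' j - \<mu> j)) / Z" by (simp add: D_def)
    also have "\<dots> = (\<Sum>j\<in>UNIV. e j / Z * (\<mu>' j - \<mu> j))"
      by (simp add: sum_divide_distrib)
    finally show ?thesis unfolding delta_def Z_def e_def .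
  qed
  moreover have "phi \<epsilon> \<kappa> \<mu> i = - \<epsilon> * ln Z" unfolding phi_def Z_def e_def ..
  ultimately show ?thesis by simp
qed

lemma beta_tangent:
  assumes c: "c > 0" and T: "T > 0"
  shows "beta c q' \<ge> beta c q + mu_of T c q / T * (q' - q)"
proof (cases "q \<le> c")
  case True
  then show ?thesis
  proof (cases "q' \<le> c")
    case False
    have "ln (q'/c) \<le> q'/c - 1" using False c by (intro ln_le_minus_one) auto
    then have "c * ln (q'/c) \<le> q' - c" using c by (simp add: field_simps)
    then show ?thesis using True False by (simp add: beta_def mu_of_def)
  qed (simp add: beta_def mu_of_def)
next
  case False
  then have qc: "q > c" by simp
  have mu: "mu_of T c q / T = 1 - c / q" using qc T by (simp add: mu_of_def)
  show ?thesis
  proof (cases "q' \<le> c")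
    case True
    have l: "ln (c/q) \<le> c/q - 1" using qc c by (intro ln_le_minus_one) auto
    have e: "ln (q/c) = - ln (c/q)" using qc c by (simp add: ln_div)
    have a: "c * ln (c/q) \<le> c * (c/q - 1)" using l c by (intro mult_left_mono) auto
    have l2: "c * ln (q/c) \<ge> c * (1 - c/q)" using a e by (simp add: algebra_simps)
    have "q' * (1 - c/q) \<le> c * (1 - c/q)" using True qc c by (intro mult_right_mono) auto
    moreover have "q - c - c * ln (q / c) + (1 - c / q) * (q' - q) = q' * (1 - c/q) - c * ln (q / c)"
      using qc c by (simp add: field_simps)
    ultimately have "q - c - c * ln (q / c) + (1 - c / q) * (q' - q) \<le> 0"
      using l2 by linarith
    then show ?thesis using True qc mu by (simp add: beta_def)
  next
    case False
    have l: "ln (q'/q) \<le> q'/q - 1" using False qc c by (intro ln_le_minus_one) auto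
    have "ln (q'/c) = ln (q'/q) + ln (q/c)" using False qc c by (simp add: ln_div)
    then have "c * ln (q'/c) \<le> c * (q'/q - 1) + c * ln (q/c)"
      using l c by (simp add: distrib_left)
    then have "q - c - c * ln (q / c) + (1 - c / q) * (q' - q) \<le> q' - c - c * ln (q'/c)"
      using qc c by (simp add: field_simps)
    then show ?thesis using False qc mu by (simp add: beta_def)
  qed
qed

lemma xlogx_split:
  assumes x: "x > 0" and r: "r > 0" and y: "y \<ge> 0"
  shows "xlogx y r - xlogx x r = (xlogx y x - y + x) + (y - x) * (ln (x / r) + 1)"
proof (cases "y = 0")
  case True then show ?thesis using x by (simp add: xlogx_def algebra_simps)
next
  case False
  then have "y > 0" using y by simp
  then have "ln (y / r) = ln (y / x) + ln (x / r)" using x r by (simp add: ln_div)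
  then show ?thesis using False x by (simp add: xlogx_def algebra_simps)
qed

lemma D_nonneg:
  assumes x: "x > 0" and y: "y \<ge> 0"
  shows "xlogx y x - y + x \<ge> 0"
proof (cases "y = 0")
  case True then show ?thesis using x by (simp add: xlogx_def)
next
  case False
  then have yp: "y > 0" using y by simp
  have "ln (x / y) \<le> x / y - 1" using x yp by (intro ln_le_minus_one) auto
  then have a: "y * ln (x / y) \<le> y * (x / y - 1)" using yp by (intro mult_left_mono) auto
  have b: "y * (x / y - 1) = x - y" using yp by (simp add: field_simps)
  have "ln (y / x) = - ln (x / y)" using x yp by (simp add: ln_div)
  then have "y * ln (y / x) \<ge> y - x" using a b by simp
  then show ?thesis using False yp by (simp add: xlogx_def)
qed

lemma D_zero:
  assumes x: "x > 0" and y: "y \<ge> 0" and z: "xlogx y x - y + x = 0"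
  shows "y = x"
proof (cases "y = 0")
  case True then show ?thesis using x z by (simp add: xlogx_def)
next
  case False
  then have yp: "y > 0" using y by simp
  have "ln (y / x) = - ln (x / y)" using x yp by (simp add: ln_div)
  moreover have b: "y * (x / y - 1) = x - y" using yp by (simp add: field_simps)
  moreover have "y * ln (y / x) = y - x" using z False by (simp add: xlogx_def)
  ultimately have "y * ln (x / y) = y * (x / y - 1)" by simp
  then have "ln (x / y) = x / y - 1" using yp by simp
  then have "x / y = 1" using x yp by (intro ln_eq_minus_one) auto
  then show ?thesis using yp by simp
qed

lemma transport_ineq:
  fixes \<kappa> :: "'m::finite \<Rightarrow> 'n::finite \<Rightarrow> real"
  assumes eps: "\<epsilon> > 0" and T: "T > 0" and c: "\<And>j. c j > 0"
    and muq: "\<And>j. \<mu> j = mu_of T (c j) (q j)"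
    and Xd: "\<And>i j. X i j = r i * delta \<epsilon> \<kappa> \<mu> i j"
    and qX: "\<And>j. (\<Sum>i\<in>UNIV. X i j) = q j / T"
    and r: "\<And>i. r i \<ge> 0"
    and feas: "feasible T r X' q'"
  shows "objective \<epsilon> \<kappa> c r X' q' - objective \<epsilon> \<kappa> c r X q
           \<ge> \<epsilon> * (\<Sum>i\<in>UNIV. \<Sum>j\<in>UNIV. xlogx (X' i j) (X i j) - X' i j + X i j)"
proof -
  define Dt where "Dt i j = xlogx (X' i j) (X i j) - X' i j + X i j" for i j
  define Z where "Z i = (\<Sum>k\<in>UNIV. exp (- (\<kappa> i k + \<mu> k) / \<epsilon>))" for i
  define g where "g i = \<epsilon> * (1 - ln (Z i))" for i
  have X'nn: "\<And>i j. X' i j \<ge> 0" and X'r: "\<And>i. (\<Sum>j\<in>UNIV. X' i j) = r i"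
    and X'q: "\<And>j. (\<Sum>i\<in>UNIV. X' i j) = q' j / T"
    using feas unfolding feasible_def by auto
  have Xr: "(\<Sum>j\<in>UNIV. X i j) = r i" for i
    by (simp add: Xd sum_distrib_left[symmetric] delta_sum)
  have eqt: "\<epsilon> * (xlogx (X' i j) (r i) - xlogx (X i j) (r i))
       = \<epsilon> * Dt i j + (g i - \<kappa> i j - \<mu> j) * (X' i j - X i j)" for i j
  proof (cases "r i = 0")
    case True
    then have "X i j = 0" by (simp add: Xd)
    moreover have "X' i j = 0"
    proof -
      have "(\<Sum>j\<in>UNIV. X' i j) = 0" using X'r True by simp
      then have "\<forall>j\<in>UNIV. X' i j = 0" using X'nn by (subst (asm) sum_nonneg_eq_0_iff) auto
      then show ?thesis by simp
    qed
    ultimately show ?thesis by (simp add: Dt_def xlogx_def)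
  next
    case False
    then have rp: "r i > 0" using r[of i] by simp
    have Xp: "X i j > 0" using rp delta_pos[of \<epsilon> \<kappa> \<mu> i j] by (simp add: Xd)
    have Zp: "Z i > 0" unfolding Z_def by (intro sum_pos) auto
    have "X i j / r i = delta \<epsilon> \<kappa> \<mu> i j" using rp by (simp add: Xd)
    also have "\<dots> = exp (- (\<kappa> i j + \<mu> j) / \<epsilon>) / Z i" by (simp add: delta_def Z_def)
    finally have "ln (X i j / r i) = - (\<kappa> i j + \<mu> j) / \<epsilon> - ln (Z i)"
      using Zp by (simp add: ln_div)
    then have l: "\<epsilon> * (ln (X i j / r i) + 1) = g i - \<kappa> i j - \<mu> j"
      using eps by (simp add: g_def field_simps)
    have "\<epsilon> * (xlogx (X' i j) (r i) - xlogx (X i j) (r i))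
        = \<epsilon> * Dt i j + (\<epsilon> * (ln (X i j / r i) + 1)) * (X' i j - X i j)"
    proof -
      have s: "xlogx (X' i j) (r i) - xlogx (X i j) (r i) = Dt i j + (X' i j - X i j) * (ln (X i j / r i) + 1)"
        using xlogx_split[OF Xp rp X'nn[of i j]] by (simp add: Dt_def)
      show ?thesis unfolding s by (simp add: algebra_simps)
    qed
    then show ?thesis using l by simp
  qed
  have gsum: "(\<Sum>j\<in>UNIV. g i * (X' i j - X i j)) = 0" for i
    by (simp add: sum_distrib_left[symmetric] sum_subtractf X'r Xr)
  have S1: "\<epsilon> * (\<Sum>i\<in>UNIV. \<Sum>j\<in>UNIV. xlogx (X' i j) (r i)) - \<epsilon> * (\<Sum>i\<in>UNIV. \<Sum>j\<in>UNIV. xlogx (X i j) (r i))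
      = \<epsilon> * (\<Sum>i\<in>UNIV. \<Sum>j\<in>UNIV. Dt i j)
        - (\<Sum>i\<in>UNIV. \<Sum>j\<in>UNIV. \<kappa> i j * (X' i j - X i j))
        - (\<Sum>j\<in>UNIV. \<mu> j * (\<Sum>i\<in>UNIV. X' i j - X i j))"
  proof -
    have "\<epsilon> * (\<Sum>i\<in>UNIV. \<Sum>j\<in>UNIV. xlogx (X' i j) (r i)) - \<epsilon> * (\<Sum>i\<in>UNIV. \<Sum>j\<in>UNIV. xlogx (X i j) (r i))
        = (\<Sum>i\<in>UNIV. \<Sum>j\<in>UNIV. \<epsilon> * (xlogx (X' i j) (r i) - xlogx (X i j) (r i)))"
      by (simp add: sum_distrib_left sum_subtractf right_diff_distrib)
    also have "\<dots> = (\<Sum>i\<in>UNIV. \<Sum>j\<in>UNIV. \<epsilon> * Dt i j + g i * (X' i j - X i j)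
                  - \<kappa> i j * (X' i j - X i j) - \<mu> j * (X' i j - X i j))"
      by (rule sum.cong[OF refl], rule sum.cong[OF refl], subst eqt, simp add: algebra_simps)
    also have "\<dots> = \<epsilon> * (\<Sum>i\<in>UNIV. \<Sum>j\<in>UNIV. Dt i j) + (\<Sum>i\<in>UNIV. \<Sum>j\<in>UNIV. g i * (X' i j - X i j))
        - (\<Sum>i\<in>UNIV. \<Sum>j\<in>UNIV. \<kappa> i j * (X' i j - X i j))
        - (\<Sum>i\<in>UNIV. \<Sum>j\<in>UNIV. \<mu> j * (X' i j - X i j))"
      by (simp add: sum.distrib sum_subtractf sum_distrib_left)
    also have "(\<Sum>i\<in>UNIV. \<Sum>j\<in>UNIV. \<mu> j * (X' i j - X i j)) = (\<Sum>j\<in>UNIV. \<mu> j * (\<Sum>i\<in>UNIV. X' i j - X i j))"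
      by (subst sum.swap) (simp add: sum_distrib_left)
    finally show ?thesis by (simp add: gsum)
  qed
  have B: "(\<Sum>j\<in>UNIV. beta (c j) (q' j)) - (\<Sum>j\<in>UNIV. beta (c j) (q j))
       \<ge> (\<Sum>j\<in>UNIV. \<mu> j * (\<Sum>i\<in>UNIV. X' i j - X i j))"
  proof -
    have "\<mu> j * (\<Sum>i\<in>UNIV. X' i j - X i j) \<le> beta (c j) (q' j) - beta (c j) (q j)" for j
    proof -
      have "(\<Sum>i\<in>UNIV. X' i j - X i j) = (q' j - q j) / T"
        by (simp add: sum_subtractf X'q qX diff_divide_distrib)
      then have "\<mu> j * (\<Sum>i\<in>UNIV. X' i j - X i j) = mu_of T (c j) (q j) / T * (q' j - q j)"
        by (simp add: muq)
      then show ?thesis using beta_tangent[OF c[of j] T, where q'="q' j" and q="q j"] by simp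
    qed
    then show ?thesis by (simp add: sum_subtractf[symmetric] sum_mono)
  qed
  have K: "(\<Sum>i\<in>UNIV. \<Sum>j\<in>UNIV. \<kappa> i j * X' i j) - (\<Sum>i\<in>UNIV. \<Sum>j\<in>UNIV. \<kappa> i j * X i j)
      = (\<Sum>i\<in>UNIV. \<Sum>j\<in>UNIV. \<kappa> i j * (X' i j - X i j))"
    by (simp add: sum_subtractf right_diff_distrib)
  show ?thesis
    using S1 B K unfolding objective_def Dt_def[symmetric] by (simp add: algebra_simps)
qed

lemma mu_of_bounds:
  assumes "c > 0" "T > 0"
  shows "0 \<le> mu_of T c q" "mu_of T c q < T"
  using assms by (auto simp: mu_of_def field_simps)

lemma ln_tangent:
  fixes y y' :: real
  assumes "y > 0" "y' > 0"
  shows "ln y' \<le> ln y + (y' - y) / y"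
proof -
  have "ln (y' / y) \<le> y' / y - 1" using assms by (intro ln_le_minus_one) auto
  moreover have "y' / y - 1 = (y' - y) / y" using assms by (simp add: field_simps)
  ultimately show ?thesis using assms by (simp add: ln_div)
qed

lemma W_mu_max:
  fixes \<kappa> :: "'m::finite \<Rightarrow> 'n::finite \<Rightarrow> real"
  assumes eps: "\<epsilon> > 0" and T: "T > 0" and c: "\<And>j. c j > 0"
    and muq: "\<And>j. \<mu> j = mu_of T (c j) (q j)"
    and qX: "\<And>j. (\<Sum>i\<in>UNIV. r i * delta \<epsilon> \<kappa> \<mu> i j) = q j / T"
    and r: "\<And>i. r i \<ge> 0"
    and mu': "\<mu>' \<in> Mbox T"
  shows "W \<epsilon> \<kappa> c T U r \<mu>' \<le> W \<epsilon> \<kappa> c T U r \<mu>"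
proof -
  have m0: "0 \<le> \<mu>' j" "\<mu>' j < T" for j using mu' by (auto simp: Mbox_def)
  have mb: "0 \<le> \<mu> j" "\<mu> j < T" for j using mu_of_bounds[OF c[of j] T] by (auto simp: muq)
  have A: "(\<Sum>i\<in>UNIV. r i * phi \<epsilon> \<kappa> \<mu>' i - U i (r i))
     \<le> (\<Sum>i\<in>UNIV. r i * phi \<epsilon> \<kappa> \<mu> i - U i (r i)) + (\<Sum>i\<in>UNIV. r i * (\<Sum>j\<in>UNIV. delta \<epsilon> \<kappa> \<mu> i j * (\<mu>' j - \<mu> j)))"
  proof -
    have "r i * phi \<epsilon> \<kappa> \<mu>' i - U i (r i) \<le> (r i * phi \<epsilon> \<kappa> \<mu> i - U i (r i)) + r i * (\<Sum>j\<in>UNIV. delta \<epsilon> \<kappa> \<mu> i j * (\<mu>' j - \<mu> j))" for i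
      using mult_left_mono[OF tangent_phi[OF eps, of \<kappa> \<mu>' i \<mu>] r[of i]] by (simp add: algebra_simps)
    then show ?thesis by (simp add: sum.distrib[symmetric] sum_mono)
  qed
  have A2: "(\<Sum>i\<in>UNIV. r i * (\<Sum>j\<in>UNIV. delta \<epsilon> \<kappa> \<mu> i j * (\<mu>' j - \<mu> j))) = (\<Sum>j\<in>UNIV. q j / T * (\<mu>' j - \<mu> j))"
  proof -
    have "(\<Sum>i\<in>UNIV. r i * (\<Sum>j\<in>UNIV. delta \<epsilon> \<kappa> \<mu> i j * (\<mu>' j - \<mu> j)))
        = (\<Sum>j\<in>UNIV. \<Sum>i\<in>UNIV. r i * delta \<epsilon> \<kappa> \<mu> i j * (\<mu>' j - \<mu> j))"
      by (subst sum.swap) (simp add: sum_distrib_left mult.assoc)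
    also have "\<dots> = (\<Sum>j\<in>UNIV. q j / T * (\<mu>' j - \<mu> j))"
      by (simp add: sum_distrib_right[symmetric] qX)
    finally show ?thesis .
  qed
  have B: "c j * ln (1 - \<mu>' j / T) \<le> c j * ln (1 - \<mu> j / T) - c j / (T - \<mu> j) * (\<mu>' j - \<mu> j)" for j
  proof -
    have y: "1 - \<mu> j / T > 0" "1 - \<mu>' j / T > 0" using mb[of j] m0[of j] T by (auto simp: field_simps)
    have "ln (1 - \<mu>' j / T) \<le> ln (1 - \<mu> j / T) + ((1 - \<mu>' j / T) - (1 - \<mu> j / T)) / (1 - \<mu> j / T)"
      by (rule ln_tangent[OF y])
    also have "((1 - \<mu>' j / T) - (1 - \<mu> j / T)) / (1 - \<mu> j / T) = - ((\<mu>' j - \<mu> j) / (T - \<mu> j))"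
      using T mb[of j] by (simp add: field_simps)
    finally have "ln (1 - \<mu>' j / T) \<le> ln (1 - \<mu> j / T) - (\<mu>' j - \<mu> j) / (T - \<mu> j)" by linarith
    from mult_left_mono[OF this less_imp_le[OF c[of j]]] show ?thesis by (simp add: algebra_simps)
  qed
  have C: "(q j / T - c j / (T - \<mu> j)) * (\<mu>' j - \<mu> j) \<le> 0" for j
  proof (cases "q j \<le> c j")
    case True
    then have "\<mu> j = 0" by (simp add: muq mu_of_def)
    moreover have "q j / T - c j / T \<le> 0" using True T by (simp add: field_simps)
    ultimately show ?thesis using m0[of j] by (simp add: mult_nonpos_nonneg)
  next
    case False
    then have "\<mu> j = T * (1 - c j / q j)" by (simp add: muq mu_of_def)
    moreover have "q j > 0" using False c[of j] by simp
    ultimately have "T - \<mu> j = T * c j / q j" by (simp add: field_simps)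
    then have "c j / (T - \<mu> j) = q j / T" using T c[of j] by simp
    then show ?thesis by simp
  qed
  have "W \<epsilon> \<kappa> c T U r \<mu>' \<le> W \<epsilon> \<kappa> c T U r \<mu> + (\<Sum>j\<in>UNIV. (q j / T - c j / (T - \<mu> j)) * (\<mu>' j - \<mu> j))"
  proof -
    have "(\<Sum>j\<in>UNIV. c j * ln (1 - \<mu>' j / T)) \<le> (\<Sum>j\<in>UNIV. c j * ln (1 - \<mu> j / T) - c j / (T - \<mu> j) * (\<mu>' j - \<mu> j))"
      by (rule sum_mono) (rule B)
    then show ?thesis using A A2 unfolding W_def
      by (simp add: sum_subtractf left_diff_distrib sum.distrib)
  qed
  also have "\<dots> \<le> W \<epsilon> \<kappa> c T U r \<mu>"
    using sum_mono[of UNIV "\<lambda>j. (q j / T - c j / (T - \<mu> j)) * (\<mu>' j - \<mu> j)" "\<lambda>_. 0"] C by simp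
  finally show ?thesis .
qed

lemma W_mid:
  fixes \<kappa> :: "'m::finite \<Rightarrow> 'n::finite \<Rightarrow> real"
  assumes eps: "\<epsilon> > 0" and T: "T > 0" and c: "\<And>j. c j > 0"
    and r: "\<And>i. r i \<ge> 0"
    and m1: "\<mu>1 \<in> Mbox T" and m2: "\<mu>2 \<in> Mbox T" and ne: "\<mu>1 \<noteq> \<mu>2"
  shows "W \<epsilon> \<kappa> c T U r (\<lambda>j. (\<mu>1 j + \<mu>2 j) / 2) > (W \<epsilon> \<kappa> c T U r \<mu>1 + W \<epsilon> \<kappa> c T U r \<mu>2) / 2"
proof -
  define m where "m = (\<lambda>j. (\<mu>1 j + \<mu>2 j) / 2)"
  have P: "phi \<epsilon> \<kappa> \<mu>1 i + phi \<epsilon> \<kappa> \<mu>2 i \<le> 2 * phi \<epsilon> \<kappa> m i" for i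
  proof -
    have "phi \<epsilon> \<kappa> \<mu>1 i + phi \<epsilon> \<kappa> \<mu>2 i \<le> 2 * phi \<epsilon> \<kappa> m i
        + ((\<Sum>j\<in>UNIV. delta \<epsilon> \<kappa> m i j * (\<mu>1 j - m j)) + (\<Sum>j\<in>UNIV. delta \<epsilon> \<kappa> m i j * (\<mu>2 j - m j)))"
      using tangent_phi[OF eps, of \<kappa> \<mu>1 i m] tangent_phi[OF eps, of \<kappa> \<mu>2 i m] by simp
    also have "(\<Sum>j\<in>UNIV. delta \<epsilon> \<kappa> m i j * (\<mu>1 j - m j)) + (\<Sum>j\<in>UNIV. delta \<epsilon> \<kappa> m i j * (\<mu>2 j - m j)) = 0"
      by (simp add: sum.distrib[symmetric] distrib_left[symmetric] m_def)
    finally show ?thesis by simp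
  qed
  have P2: "(\<Sum>i\<in>UNIV. r i * phi \<epsilon> \<kappa> \<mu>1 i - U i (r i)) + (\<Sum>i\<in>UNIV. r i * phi \<epsilon> \<kappa> \<mu>2 i - U i (r i))
      \<le> 2 * (\<Sum>i\<in>UNIV. r i * phi \<epsilon> \<kappa> m i - U i (r i))"
  proof -
    have "(r i * phi \<epsilon> \<kappa> \<mu>1 i - U i (r i)) + (r i * phi \<epsilon> \<kappa> \<mu>2 i - U i (r i)) \<le> 2 * (r i * phi \<epsilon> \<kappa> m i - U i (r i))" for i
      using mult_left_mono[OF P[of i] r[of i]] by (simp add: algebra_simps)
    then show ?thesis by (simp add: sum.distrib[symmetric] sum_distrib_left sum_mono)
  qed
  have Lle: "c j * ln (1 - \<mu>1 j / T) + c j * ln (1 - \<mu>2 j / T) \<le> 2 * (c j * ln (1 - m j / T))"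
   and Llt: "\<mu>1 j \<noteq> \<mu>2 j \<Longrightarrow> c j * ln (1 - \<mu>1 j / T) + c j * ln (1 - \<mu>2 j / T) < 2 * (c j * ln (1 - m j / T))" for j
  proof -
    define a where "a = 1 - \<mu>1 j / T"
    define b where "b = 1 - \<mu>2 j / T"
    have a: "a > 0" and b: "b > 0" using m1 m2 T by (auto simp: Mbox_def a_def b_def field_simps)
    have mm: "1 - m j / T = (a + b) / 2" using T by (simp add: a_def b_def m_def field_simps)
    have ab: "a * b \<le> ((a + b) / 2)^2"
    proof -
      have "(a - b)^2 \<ge> 0" by simp
      then show ?thesis by (simp add: power2_eq_square field_simps)
    qed
    have "ln a + ln b = ln (a * b)" using a b by (simp add: ln_mult)
    also have "\<dots> \<le> ln (((a + b) / 2)^2)" using a b ab by (subst ln_le_cancel_iff) auto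
    also have "\<dots> = 2 * ln ((a + b) / 2)" using a b by (simp add: ln_realpow)
    finally have "ln a + ln b \<le> 2 * ln ((a + b) / 2)" .
    from mult_left_mono[OF this less_imp_le[OF c[of j]]]
    show "c j * ln (1 - \<mu>1 j / T) + c j * ln (1 - \<mu>2 j / T) \<le> 2 * (c j * ln (1 - m j / T))"
      by (simp add: a_def[symmetric] b_def[symmetric] mm algebra_simps)
    assume ne: "\<mu>1 j \<noteq> \<mu>2 j"
    then have "a \<noteq> b" using T by (simp add: a_def b_def)
    then have ab': "a * b < ((a + b) / 2)^2"
    proof -
      have "(a - b)^2 > 0" using \<open>a \<noteq> b\<close> by simp
      then show ?thesis by (simp add: power2_eq_square field_simps)
    qed
    have "ln a + ln b = ln (a * b)" using a b by (simp add: ln_mult)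
    also have "\<dots> < ln (((a + b) / 2)^2)" using a b ab' by (subst ln_less_cancel_iff) auto
    also have "\<dots> = 2 * ln ((a + b) / 2)" using a b by (simp add: ln_realpow)
    finally have "ln a + ln b < 2 * ln ((a + b) / 2)" .
    from mult_strict_left_mono[OF this c[of j]]
    show "c j * ln (1 - \<mu>1 j / T) + c j * ln (1 - \<mu>2 j / T) < 2 * (c j * ln (1 - m j / T))"
      by (simp add: a_def[symmetric] b_def[symmetric] mm algebra_simps)
  qed
  obtain j0 where j0: "\<mu>1 j0 \<noteq> \<mu>2 j0" using ne by auto
  have L: "(\<Sum>j\<in>UNIV. c j * ln (1 - \<mu>1 j / T)) + (\<Sum>j\<in>UNIV. c j * ln (1 - \<mu>2 j / T))
      < 2 * (\<Sum>j\<in>UNIV. c j * ln (1 - m j / T))"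
  proof -
    have "(\<Sum>j\<in>UNIV. c j * ln (1 - \<mu>1 j / T) + c j * ln (1 - \<mu>2 j / T)) < (\<Sum>j\<in>UNIV. 2 * (c j * ln (1 - m j / T)))"
      by (rule sum_strict_mono_ex1) (use Lle Llt j0 in auto)
    then show ?thesis by (simp add: sum.distrib sum_distrib_left)
  qed
  show ?thesis using P2 L unfolding W_def m_def[symmetric] by simp
qed

lemma mu_of_max:
  assumes "c > 0"
  shows "mu_of T c q = T * (1 - c / max q c)"
  using assms by (auto simp: mu_of_def max_def)

lemma exists_eq:
  fixes \<kappa> :: "'m::finite \<Rightarrow> 'n::finite \<Rightarrow> real" and c :: "'n \<Rightarrow> real"
  assumes eps: "\<epsilon> > 0" and T: "T > 0" and c: "\<And>j. c j > 0"
    and rbar: "\<And>i. rbar i > 0"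
    and p_range: "\<And>i \<tau>. 0 \<le> p i \<tau> \<and> p i \<tau> \<le> 1"
    and p_cont: "\<And>i. continuous_on UNIV (p i)"
  shows "\<exists>X q \<mu> r. equilibrium \<epsilon> T \<kappa> c rbar p X q \<mu> r"
proof -
  define B where "B = T * (\<Sum>i\<in>UNIV. rbar i)"
  define mf where "mf = (\<lambda>(v::real^'n) j. T * (1 - c j / max (v $ j) (c j)))"
  define f where "f = (\<lambda>v::real^'n. \<chi> j. T * (\<Sum>i\<in>UNIV. rbar i * p i (phi \<epsilon> \<kappa> (mf v) i) * delta \<epsilon> \<kappa> (mf v) i j))"
  define S where "S = cbox (0::real^'n) (\<chi> j. B)"
  have mem: "v \<in> S \<longleftrightarrow> (\<forall>j. 0 \<le> v $ j \<and> v $ j \<le> B)" for v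
    unfolding S_def mem_box_cart by simp
  have Bnn: "B \<ge> 0" unfolding B_def using T rbar by (intro mult_nonneg_nonneg sum_nonneg) (auto intro: less_imp_le)
  have "continuous_on S f"
  proof -
    have cm: "continuous_on S (\<lambda>v. mf v k)" for k
      unfolding mf_def using c[of k] by (intro continuous_intros) auto
    have cZ: "continuous_on S (\<lambda>v. \<Sum>k\<in>UNIV. exp (- (\<kappa> i k + mf v k) / \<epsilon>))" for i
      using eps by (intro continuous_intros cm) auto
    have Zp: "(\<Sum>k\<in>UNIV. exp (- (\<kappa> i k + mf v k) / \<epsilon>)) > 0" for i v by (intro sum_pos) auto
    have cphi: "continuous_on S (\<lambda>v. phi \<epsilon> \<kappa> (mf v) i)" for i
      unfolding phi_def using Zp eps by (intro continuous_intros cZ) (auto simp: less_imp_neq[symmetric])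
    have cdelta: "continuous_on S (\<lambda>v. delta \<epsilon> \<kappa> (mf v) i j)" for i j
      unfolding delta_def using Zp eps by (intro continuous_intros cZ cm) (auto simp: less_imp_neq[symmetric])
    have cp: "continuous_on S (\<lambda>v. p i (phi \<epsilon> \<kappa> (mf v) i))" for i
      by (rule continuous_on_compose2[OF p_cont cphi]) auto
    show ?thesis unfolding f_def by (intro continuous_intros cp cdelta)
  qed
  moreover have "f \<in> S \<rightarrow> S"
  proof
    fix v assume "v \<in> S"
    show "f v \<in> S" unfolding mem
    proof
      fix j
      have t: "0 \<le> rbar i * p i (phi \<epsilon> \<kappa> (mf v) i) * delta \<epsilon> \<kappa> (mf v) i j"
        "rbar i * p i (phi \<epsilon> \<kappa> (mf v) i) * delta \<epsilon> \<kappa> (mf v) i j \<le> rbar i" for i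
      proof -
        have a: "0 \<le> p i (phi \<epsilon> \<kappa> (mf v) i)" "p i (phi \<epsilon> \<kappa> (mf v) i) \<le> 1" using p_range by auto
        have b: "0 < delta \<epsilon> \<kappa> (mf v) i j" "delta \<epsilon> \<kappa> (mf v) i j \<le> 1" by (rule delta_pos, rule delta_le1)
        show "0 \<le> rbar i * p i (phi \<epsilon> \<kappa> (mf v) i) * delta \<epsilon> \<kappa> (mf v) i j"
          using a b rbar[of i] by simp
        have "p i (phi \<epsilon> \<kappa> (mf v) i) * delta \<epsilon> \<kappa> (mf v) i j \<le> 1 * 1"
          using a b by (intro mult_mono) auto
        then show "rbar i * p i (phi \<epsilon> \<kappa> (mf v) i) * delta \<epsilon> \<kappa> (mf v) i j \<le> rbar i"
          using mult_left_mono[of _ 1 "rbar i"] rbar[of i] by (simp add: mult.assoc)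
      qed
      have "0 \<le> (\<Sum>i\<in>UNIV. rbar i * p i (phi \<epsilon> \<kappa> (mf v) i) * delta \<epsilon> \<kappa> (mf v) i j)"
        by (intro sum_nonneg t)
      moreover have "(\<Sum>i\<in>UNIV. rbar i * p i (phi \<epsilon> \<kappa> (mf v) i) * delta \<epsilon> \<kappa> (mf v) i j) \<le> (\<Sum>i\<in>UNIV. rbar i)"
        by (intro sum_mono t)
      ultimately show "0 \<le> f v $ j \<and> f v $ j \<le> B"
        unfolding f_def B_def using T by simp
    qed
  qed
  moreover have "compact S" "convex S" by (auto simp: S_def)
  moreover have "0 \<in> S" using Bnn by (simp add: mem)
  then have "S \<noteq> {}" by auto
  ultimately obtain v where v: "v \<in> S" "f v = v" using brouwer by metis
  define q where "q j = v $ j" for j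
  define \<mu> where "\<mu> j = mu_of T (c j) (q j)" for j
  define r where "r i = rbar i * p i (phi \<epsilon> \<kappa> \<mu> i)" for i
  define X where "X i j = r i * delta \<epsilon> \<kappa> \<mu> i j" for i j
  have mfv: "mf v = \<mu>" unfolding mf_def \<mu>_def q_def using c by (auto simp: mu_of_max)
  have "(\<Sum>i\<in>UNIV. X i j) = q j / T" for j
  proof -
    have "f v $ j = q j" using v by (simp add: q_def)
    then have "T * (\<Sum>i\<in>UNIV. X i j) = q j" unfolding f_def mfv X_def r_def by simp
    then show ?thesis using T by (simp add: field_simps)
  qed
  then have "equilibrium \<epsilon> T \<kappa> c rbar p X q \<mu> r"
    unfolding equilibrium_def by (simp add: \<mu>_def r_def X_def)
  then show ?thesis by blast
qed

lemma argmax_unique: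
  fixes U :: "real \<Rightarrow> real"
  assumes sc: "strict_concave_on {0..b} U"
    and am: "is_arg_max (\<lambda>r. U r - \<tau> * r) (\<lambda>r. r \<in> {0..b}) a"
    and x: "x \<in> {0..b}" and ge: "U a - \<tau> * a \<le> U x - \<tau> * x"
  shows "x = a"
proof (rule ccontr)
  assume ne: "x \<noteq> a"
  have a: "a \<in> {0..b}" and amax: "\<And>y. y \<in> {0..b} \<Longrightarrow> U y - \<tau> * y \<le> U a - \<tau> * a"
    using am by (auto simp: is_arg_max_linorder)
  have "(1/2) * U x + (1 - 1/2) * U a < U ((1/2) * x + (1 - 1/2) * a)"
  proof -
    have h: "\<forall>x\<in>{0..b}. \<forall>y\<in>{0..b}. \<forall>t. x \<noteq> y \<and> 0 < t \<and> t < 1 \<longrightarrow>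
        t * U x + (1 - t) * U y < U (t * x + (1 - t) * y)" using sc unfolding strict_concave_on_def by blast
    show ?thesis using h[rule_format, OF x a, of "1/2"] ne by simp
  qed
  moreover have "(1/2) * x + (1 - 1/2) * a \<in> {0..b}" using x a by auto
  ultimately have "U a - \<tau> * a < U ((1/2) * x + (1 - 1/2) * a) - \<tau> * ((1/2) * x + (1 - 1/2) * a)"
    using ge by (simp add: algebra_simps)
  with amax[OF \<open>(1/2) * x + (1 - 1/2) * a \<in> {0..b}\<close>] show False by simp
qed

lemma eq_imp_sp:
  fixes \<kappa> :: "'m::finite \<Rightarrow> 'n::finite \<Rightarrow> real"
  assumes eps: "\<epsilon> > 0" and T: "T > 0" and c: "\<And>j. c j > 0"
    and rbar: "\<And>i. rbar i > 0"
    and U_demand: "\<And>i \<tau>. is_arg_max (\<lambda>r. U i r - \<tau> * r) (\<lambda>r. r \<in> {0..rbar i}) (rbar i * p i \<tau>)"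
    and E: "equilibrium \<epsilon> T \<kappa> c rbar p X q \<mu> r"
  shows "saddle_point_W \<epsilon> \<kappa> c T U rbar r \<mu> \<and> solves_transport \<epsilon> T \<kappa> c r X q"
proof -
  have muq: "\<And>j. \<mu> j = mu_of T (c j) (q j)" and rr: "\<And>i. r i = rbar i * p i (phi \<epsilon> \<kappa> \<mu> i)"
    and Xd: "\<And>i j. X i j = r i * delta \<epsilon> \<kappa> \<mu> i j" and qX: "\<And>j. (\<Sum>i\<in>UNIV. X i j) = q j / T"
    using E unfolding equilibrium_def by auto
  have rin: "r i \<in> {0..rbar i}" for i using U_demand[of i "phi \<epsilon> \<kappa> \<mu> i"] rr[of i]
    by (simp add: is_arg_max_linorder)
  then have rR: "r \<in> Rbox rbar" by (simp add: Rbox_def)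
  have rnn: "\<And>i. r i \<ge> 0" using rin by simp
  have mM: "\<mu> \<in> Mbox T" using mu_of_bounds[OF c T] by (simp add: Mbox_def muq)
  have rmin: "W \<epsilon> \<kappa> c T U r \<mu> \<le> W \<epsilon> \<kappa> c T U r' \<mu>" if r': "r' \<in> Rbox rbar" for r'
  proof -
    have "r i * phi \<epsilon> \<kappa> \<mu> i - U i (r i) \<le> r' i * phi \<epsilon> \<kappa> \<mu> i - U i (r' i)" for i
    proof -
      have "r' i \<in> {0..rbar i}" using r' by (simp add: Rbox_def)
      then show ?thesis using U_demand[of i "phi \<epsilon> \<kappa> \<mu> i"] rr[of i]
        by (auto simp: is_arg_max_linorder algebra_simps)
    qed
    then show ?thesis unfolding W_def by (simp add: sum_mono)
  qed
  have mumax: "W \<epsilon> \<kappa> c T U r \<mu>' \<le> W \<epsilon> \<kappa> c T U r \<mu>" if "\<mu>' \<in> Mbox T" for \<mu>'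
    by (rule W_mu_max[OF eps T c muq _ rnn that]) (simp add: qX[symmetric] Xd)
  have Xnn: "0 \<le> X i j" for i j
    unfolding Xd by (rule mult_nonneg_nonneg[OF rnn less_imp_le[OF delta_pos]])
  have feas: "feasible T r X q"
    unfolding feasible_def using Xnn qX
    by (auto simp: Xd sum_distrib_left[symmetric] delta_sum)
  have "objective \<epsilon> \<kappa> c r X q \<le> objective \<epsilon> \<kappa> c r X' q'" if f': "feasible T r X' q'" for X' q'
  proof -
    have ge: "objective \<epsilon> \<kappa> c r X' q' - objective \<epsilon> \<kappa> c r X q
           \<ge> \<epsilon> * (\<Sum>i\<in>UNIV. \<Sum>j\<in>UNIV. xlogx (X' i j) (X i j) - X' i j + X i j)"
      by (rule transport_ineq[OF eps T c muq Xd qX rnn f'])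
    have X'nn: "\<And>i j. X' i j \<ge> 0" and X'r: "\<And>i. (\<Sum>j\<in>UNIV. X' i j) = r i"
      using f' unfolding feasible_def by auto
    have "xlogx (X' i j) (X i j) - X' i j + X i j \<ge> 0" for i j
    proof (cases "r i = 0")
      case True
      have "(\<Sum>j\<in>UNIV. X' i j) = 0" using X'r True by simp
      then have "\<forall>j\<in>UNIV. X' i j = 0" using X'nn by (subst (asm) sum_nonneg_eq_0_iff) auto
      then show ?thesis using True by (simp add: Xd xlogx_def)
    next
      case False
      then have "X i j > 0" using rnn[of i] delta_pos[of \<epsilon> \<kappa> \<mu> i j] by (simp add: Xd)
      then show ?thesis by (rule D_nonneg) (rule X'nn)
    qed
    then have "0 \<le> \<epsilon> * (\<Sum>i\<in>UNIV. \<Sum>j\<in>UNIV. xlogx (X' i j) (X i j) - X' i j + X i j)"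
      using eps by (intro mult_nonneg_nonneg sum_nonneg) auto
    then show ?thesis using ge by simp
  qed
  then show ?thesis using rR mM rmin mumax feas
    unfolding saddle_point_W_def solves_transport_def by auto
qed

lemma saddle_r:
  fixes \<kappa> :: "'m::finite \<Rightarrow> 'n::finite \<Rightarrow> real"
  assumes U_sc: "\<And>i. strict_concave_on {0..rbar i} (U i)"
    and U_demand: "\<And>i \<tau>. is_arg_max (\<lambda>r. U i r - \<tau> * r) (\<lambda>r. r \<in> {0..rbar i}) (rbar i * p i \<tau>)"
    and sp: "saddle_point_W \<epsilon> \<kappa> c T U rbar r \<mu>"
  shows "r i = rbar i * p i (phi \<epsilon> \<kappa> \<mu> i)"
proof -
  define a where "a = rbar i * p i (phi \<epsilon> \<kappa> \<mu> i)"
  define r' where "r' = r(i := a)"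
  have am: "is_arg_max (\<lambda>x. U i x - phi \<epsilon> \<kappa> \<mu> i * x) (\<lambda>x. x \<in> {0..rbar i}) a"
    using U_demand by (simp add: a_def)
  then have ain: "a \<in> {0..rbar i}" by (simp add: is_arg_max_linorder)
  have rR: "r \<in> Rbox rbar" and mM: "\<mu> \<in> Mbox T" using sp by (auto simp: saddle_point_W_def)
  have r'R: "r' \<in> Rbox rbar" using rR ain by (auto simp: Rbox_def r'_def)
  have le: "W \<epsilon> \<kappa> c T U r \<mu> \<le> W \<epsilon> \<kappa> c T U r' \<mu>" using sp r'R mM by (auto simp: saddle_point_W_def)
  define g where "g s k = s k * phi \<epsilon> \<kappa> \<mu> k - U k (s k)" for s k
  have "(\<Sum>k\<in>UNIV. g r k) \<le> (\<Sum>k\<in>UNIV. g r' k)" using le unfolding W_def g_def by simp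
  moreover have "(\<Sum>k\<in>UNIV. g r k) = g r i + (\<Sum>k\<in>UNIV - {i}. g r k)"
    by (rule sum.remove) auto
  moreover have "(\<Sum>k\<in>UNIV. g r' k) = g r' i + (\<Sum>k\<in>UNIV - {i}. g r' k)"
    by (rule sum.remove) auto
  moreover have "(\<Sum>k\<in>UNIV - {i}. g r' k) = (\<Sum>k\<in>UNIV - {i}. g r k)"
    by (rule sum.cong) (auto simp: g_def r'_def)
  ultimately have "g r i \<le> g r' i" by simp
  then have "U i a - phi \<epsilon> \<kappa> \<mu> i * a \<le> U i (r i) - phi \<epsilon> \<kappa> \<mu> i * r i"
    by (simp add: g_def r'_def algebra_simps)
  moreover have "r i \<in> {0..rbar i}" using rR by (simp add: Rbox_def)
  ultimately have "r i = a" by (intro argmax_unique[OF U_sc am])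
  then show ?thesis by (simp add: a_def)
qed

lemma saddle_unique:
  fixes \<kappa> :: "'m::finite \<Rightarrow> 'n::finite \<Rightarrow> real"
  assumes eps: "\<epsilon> > 0" and T: "T > 0" and c: "\<And>j. c j > 0"
    and U_sc: "\<And>i. strict_concave_on {0..rbar i} (U i)"
    and U_demand: "\<And>i \<tau>. is_arg_max (\<lambda>r. U i r - \<tau> * r) (\<lambda>r. r \<in> {0..rbar i}) (rbar i * p i \<tau>)"
    and s1: "saddle_point_W \<epsilon> \<kappa> c T U rbar r1 \<mu>1"
    and s2: "saddle_point_W \<epsilon> \<kappa> c T U rbar r2 \<mu>2"
  shows "\<mu>1 = \<mu>2 \<and> r1 = r2"
proof -
  have r1R: "r1 \<in> Rbox rbar" and m1: "\<mu>1 \<in> Mbox T" and r2R: "r2 \<in> Rbox rbar" and m2: "\<mu>2 \<in> Mbox T"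
    using s1 s2 by (auto simp: saddle_point_W_def)
  have S1: "\<And>r \<mu>. r \<in> Rbox rbar \<Longrightarrow> \<mu> \<in> Mbox T \<Longrightarrow> W \<epsilon> \<kappa> c T U r1 \<mu> \<le> W \<epsilon> \<kappa> c T U r1 \<mu>1 \<and> W \<epsilon> \<kappa> c T U r1 \<mu>1 \<le> W \<epsilon> \<kappa> c T U r \<mu>1"
    using s1 by (auto simp: saddle_point_W_def)
  have S2: "\<And>r \<mu>. r \<in> Rbox rbar \<Longrightarrow> \<mu> \<in> Mbox T \<Longrightarrow> W \<epsilon> \<kappa> c T U r2 \<mu> \<le> W \<epsilon> \<kappa> c T U r2 \<mu>2 \<and> W \<epsilon> \<kappa> c T U r2 \<mu>2 \<le> W \<epsilon> \<kappa> c T U r \<mu>2"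
    using s2 by (auto simp: saddle_point_W_def)
  have eqW: "W \<epsilon> \<kappa> c T U r1 \<mu>2 = W \<epsilon> \<kappa> c T U r1 \<mu>1"
    using S1[OF r2R m2] S2[OF r1R m1] by linarith
  have "\<mu>1 = \<mu>2"
  proof (rule ccontr)
    assume ne: "\<mu>1 \<noteq> \<mu>2"
    have rnn: "\<And>i. r1 i \<ge> 0" using r1R by (simp add: Rbox_def)
    have mid: "(\<lambda>j. (\<mu>1 j + \<mu>2 j) / 2) \<in> Mbox T" unfolding Mbox_def
    proof (intro CollectI allI conjI)
      fix j
      have "0 \<le> \<mu>1 j" "\<mu>1 j < T" "0 \<le> \<mu>2 j" "\<mu>2 j < T" using m1 m2 by (auto simp: Mbox_def)
      then show "0 \<le> (\<mu>1 j + \<mu>2 j) / 2" "(\<mu>1 j + \<mu>2 j) / 2 < T" by simp_all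
    qed
    from W_mid[where c=c and r=r1 and \<kappa>=\<kappa> and U=U, OF eps T c rnn m1 m2 ne] eqW
    have "W \<epsilon> \<kappa> c T U r1 (\<lambda>j. (\<mu>1 j + \<mu>2 j) / 2) > W \<epsilon> \<kappa> c T U r1 \<mu>1" by simp
    with S1[OF r1R mid] show False by simp
  qed
  moreover have "r1 = r2"
  proof
    fix i
    show "r1 i = r2 i"
      using saddle_r[OF U_sc U_demand s1, of i] saddle_r[OF U_sc U_demand s2, of i] \<open>\<mu>1 = \<mu>2\<close> by simp
  qed
  ultimately show ?thesis by simp
qed

lemma transport_unique:
  fixes \<kappa> :: "'m::finite \<Rightarrow> 'n::finite \<Rightarrow> real"
  assumes eps: "\<epsilon> > 0" and T: "T > 0" and c: "\<And>j. c j > 0"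
    and rbar: "\<And>i. rbar i > 0"
    and U_demand: "\<And>i \<tau>. is_arg_max (\<lambda>r. U i r - \<tau> * r) (\<lambda>r. r \<in> {0..rbar i}) (rbar i * p i \<tau>)"
    and E: "equilibrium \<epsilon> T \<kappa> c rbar p X q \<mu> r"
    and st: "solves_transport \<epsilon> T \<kappa> c r X' q'"
  shows "X' = X \<and> q' = q"
proof -
  have muq: "\<And>j. \<mu> j = mu_of T (c j) (q j)" and rr: "\<And>i. r i = rbar i * p i (phi \<epsilon> \<kappa> \<mu> i)"
    and Xd: "\<And>i j. X i j = r i * delta \<epsilon> \<kappa> \<mu> i j" and qX: "\<And>j. (\<Sum>i\<in>UNIV. X i j) = q j / T"
    using E unfolding equilibrium_def by auto
  have "solves_transport \<epsilon> T \<kappa> c r X q" using eq_imp_sp[OF eps T c rbar U_demand E] by simp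
  then have feas: "feasible T r X q" by (simp add: solves_transport_def)
  have f': "feasible T r X' q'" and opt: "objective \<epsilon> \<kappa> c r X' q' \<le> objective \<epsilon> \<kappa> c r X q"
    using st feas unfolding solves_transport_def by auto
  have rnn: "\<And>i. r i \<ge> 0"
    using U_demand rr by (auto simp: is_arg_max_linorder)
  have ge: "objective \<epsilon> \<kappa> c r X' q' - objective \<epsilon> \<kappa> c r X q
         \<ge> \<epsilon> * (\<Sum>i\<in>UNIV. \<Sum>j\<in>UNIV. xlogx (X' i j) (X i j) - X' i j + X i j)"
    by (rule transport_ineq[OF eps T c muq Xd qX rnn f'])
  have X'nn: "\<And>i j. X' i j \<ge> 0" and X'r: "\<And>i. (\<Sum>j\<in>UNIV. X' i j) = r i"
    and X'q: "\<And>j. (\<Sum>i\<in>UNIV. X' i j) = q' j / T"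
    using f' unfolding feasible_def by auto
  define D where "D i j = xlogx (X' i j) (X i j) - X' i j + X i j" for i j
  have Dprop: "D i j \<ge> 0 \<and> (D i j = 0 \<longrightarrow> X' i j = X i j)" for i j
  proof (cases "r i = 0")
    case True
    have "(\<Sum>j\<in>UNIV. X' i j) = 0" using X'r True by simp
    then have "\<forall>j\<in>UNIV. X' i j = 0" using X'nn by (subst (asm) sum_nonneg_eq_0_iff) auto
    then show ?thesis using True by (simp add: D_def Xd xlogx_def)
  next
    case False
    then have "X i j > 0" using rnn[of i] delta_pos[of \<epsilon> \<kappa> \<mu> i j] by (simp add: Xd)
    then show ?thesis unfolding D_def using D_nonneg D_zero X'nn by blast
  qed
  have "(\<Sum>i\<in>UNIV. \<Sum>j\<in>UNIV. D i j) \<le> 0"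
  proof -
    have "\<epsilon> * (\<Sum>i\<in>UNIV. \<Sum>j\<in>UNIV. D i j) \<le> 0" using ge opt unfolding D_def by simp
    then show ?thesis using eps by (simp add: mult_le_0_iff)
  qed
  moreover have "(\<Sum>i\<in>UNIV. \<Sum>j\<in>UNIV. D i j) \<ge> 0" using Dprop by (intro sum_nonneg) auto
  ultimately have "(\<Sum>i\<in>UNIV. \<Sum>j\<in>UNIV. D i j) = 0" by simp
  then have "\<forall>i\<in>UNIV. (\<Sum>j\<in>UNIV. D i j) = 0"
    using Dprop by (subst (asm) sum_nonneg_eq_0_iff) (auto intro: sum_nonneg)
  then have "D i j = 0" for i j
    using Dprop by (metis UNIV_I finite sum_nonneg_eq_0_iff)
  then have XX: "X' = X" using Dprop by (auto intro!: ext)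
  have "q' = q"
  proof
    fix j
    have "q' j / T = q j / T" using X'q[of j] qX[of j] XX by (metis)
    then show "q' j = q j" using T by simp
  qed
  with XX show ?thesis by simp
qed

theorem theorem3:
  fixes c :: "'n::finite \<Rightarrow> real" and T \<epsilon> :: real
    and \<kappa> :: "'m::finite \<Rightarrow> 'n \<Rightarrow> real"
    and rbar :: "'m \<Rightarrow> real"
    and p :: "'m \<Rightarrow> real \<Rightarrow> real" and U :: "'m \<Rightarrow> real \<Rightarrow> real"
    and Xs :: "'m \<Rightarrow> 'n \<Rightarrow> real" and qs \<mu>s :: "'n \<Rightarrow> real" and rs :: "'m \<Rightarrow> real"
  assumes c_pos: "\<And>j. c j > 0"
    and T_pos: "T > 0" and eps_pos: "\<epsilon> > 0"
    and kappa_nonneg: "\<And>i j. \<kappa> i j \<ge> 0"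
    and rbar_pos: "\<And>i. rbar i > 0"
    and p_range: "\<And>i \<tau>. 0 \<le> p i \<tau> \<and> p i \<tau> \<le> 1"
    and p_cont: "\<And>i. continuous_on UNIV (p i)"
    and p_antimono: "\<And>i. antimono (p i)"
    and p_neg: "\<And>i \<tau>. \<tau> \<le> 0 \<Longrightarrow> p i \<tau> = 1"
    and p_lim: "\<And>i. (p i \<longlongrightarrow> 0) at_top"
    and U_cont: "\<And>i. continuous_on {0..rbar i} (U i)"
    and U_mono: "\<And>i. mono_on {0..rbar i} (U i)"
    and U_strict_concave: "\<And>i. strict_concave_on {0..rbar i} (U i)"
    and U_demand: "\<And>i \<tau>. is_arg_max (\<lambda>r. U i r - \<tau> * r) (\<lambda>r. r \<in> {0..rbar i})
                              (rbar i * p i \<tau>)"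
  shows "((saddle_point_W \<epsilon> \<kappa> c T U rbar rs \<mu>s \<and> solves_transport \<epsilon> T \<kappa> c rs Xs qs)
            \<longleftrightarrow> equilibrium \<epsilon> T \<kappa> c rbar p Xs qs \<mu>s rs)
         \<and> (\<exists>!(X, q, \<mu>, r). equilibrium \<epsilon> T \<kappa> c rbar p X q \<mu> r)"
proof -
  obtain X0 q0 \<mu>0 r0 where E0: "equilibrium \<epsilon> T \<kappa> c rbar p X0 q0 \<mu>0 r0"
    using exists_eq[where c=c and rbar=rbar and p=p and \<kappa>=\<kappa>, OF eps_pos T_pos c_pos rbar_pos p_range p_cont] by blast
  have SP0: "saddle_point_W \<epsilon> \<kappa> c T U rbar r0 \<mu>0 \<and> solves_transport \<epsilon> T \<kappa> c r0 X0 q0"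
    by (rule eq_imp_sp[where c=c and rbar=rbar and p=p and U=U and \<kappa>=\<kappa>, OF eps_pos T_pos c_pos rbar_pos U_demand E0])
  have P1: "(saddle_point_W \<epsilon> \<kappa> c T U rbar rs \<mu>s \<and> solves_transport \<epsilon> T \<kappa> c rs Xs qs)
            \<longleftrightarrow> equilibrium \<epsilon> T \<kappa> c rbar p Xs qs \<mu>s rs"
  proof
    assume H: "saddle_point_W \<epsilon> \<kappa> c T U rbar rs \<mu>s \<and> solves_transport \<epsilon> T \<kappa> c rs Xs qs"
    have "\<mu>s = \<mu>0 \<and> rs = r0"
      using saddle_unique[where c=c and rbar=rbar and p=p and U=U and \<kappa>=\<kappa>, OF eps_pos T_pos c_pos U_strict_concave U_demand] H SP0 by blast
    moreover have "Xs = X0 \<and> qs = q0"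
      using transport_unique[where c=c and rbar=rbar and p=p and U=U and \<kappa>=\<kappa> and X'=Xs and q'=qs, OF eps_pos T_pos c_pos rbar_pos U_demand E0] H calculation by simp
    ultimately show "equilibrium \<epsilon> T \<kappa> c rbar p Xs qs \<mu>s rs" using E0 by simp
  next
    assume "equilibrium \<epsilon> T \<kappa> c rbar p Xs qs \<mu>s rs"
    then show "saddle_point_W \<epsilon> \<kappa> c T U rbar rs \<mu>s \<and> solves_transport \<epsilon> T \<kappa> c rs Xs qs"
      by (rule eq_imp_sp[where c=c and rbar=rbar and p=p and U=U and \<kappa>=\<kappa>, OF eps_pos T_pos c_pos rbar_pos U_demand])
  qed
  have uniq: "X = X0 \<and> q = q0 \<and> \<mu> = \<mu>0 \<and> r = r0" if E: "equilibrium \<epsilon> T \<kappa> c rbar p X q \<mu> r" for X q \<mu> r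
  proof -
    have SP: "saddle_point_W \<epsilon> \<kappa> c T U rbar r \<mu>"
      using eq_imp_sp[where c=c and rbar=rbar and p=p and U=U and \<kappa>=\<kappa>, OF eps_pos T_pos c_pos rbar_pos U_demand E] by simp
    have mr: "\<mu> = \<mu>0 \<and> r = r0"
      using saddle_unique[where c=c and rbar=rbar and p=p and U=U and \<kappa>=\<kappa>, OF eps_pos T_pos c_pos U_strict_concave U_demand] SP SP0 by blast
    have XX: "X = X0"
      using E E0 mr unfolding equilibrium_def by (auto intro!: ext)
    have "q = q0"
    proof
      fix j
      have "q j / T = q0 j / T" using E E0 XX unfolding equilibrium_def by metis
      then show "q j = q0 j" using T_pos by simp
    qed
    with XX mr show ?thesis by simp
  qed
  have P2: "\<exists>!(X, q, \<mu>, r). equilibrium \<epsilon> T \<kappa> c rbar p X q \<mu> r"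
  proof (rule ex1I[of _ "(X0, q0, \<mu>0, r0)"])
    show "case (X0, q0, \<mu>0, r0) of (X, q, \<mu>, r) \<Rightarrow> equilibrium \<epsilon> T \<kappa> c rbar p X q \<mu> r"
      using E0 by simp
  next
    fix y assume "case y of (X, q, \<mu>, r) \<Rightarrow> equilibrium \<epsilon> T \<kappa> c rbar p X q \<mu> r"
    then show "y = (X0, q0, \<mu>0, r0)" using uniq by (cases y) auto
  qed
  show ?thesis using P1 P2 by simp
qed

end
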